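(* Let $G$ be a graph on vertex set $[n]$. Suppose $v\in[n]$ has three distinct neighbours $R=\{r_1,r_2,r_3\}$ with $\deg(r_i)\geq 2$ for $i=1,2,3$, and assume that no triangle of $G$ contains $v$ and an element of $R$. (i) Then there is a $\triangle^+$-switch $(G,\widetilde{G})$ such that $\widetilde{G}$ contains a triangle $T$ with $v\in T$ and $R\cap T\neq\emptyset$. (ii) Furthermore, such a $\triangle^+$-switch can be chosen with $r_1\in T$, unless for $j=2$ and $j=3$ there is a $5$-cycle in $G$ containing the path $r_1vr_j$ but no $4$-cycle in $G$ contains this path.
   Context: A $\triangle^+$-switch on a graph $G$: given five distinct vertices $b_2,b_1,x,b_3,b_4$ such that $b_2b_1,b_1x,xb_3,b_3b_4$ are edges of $G$ and $b_1b_3$, $b_2b_4$ are non-edges of $G$, the graph $\widetilde{G}$ is obtained by deleting the edges $b_1b_2,b_3b_4$ and inserting the edges $b_1b_3,b_2b_4$ (so $\widetilde{G}$ has the same degree sequence as $G$ and contains the triangle $xb_1b_3$). *)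

theory Defs
  imports Main
begin

definition graph_on :: "nat \<Rightarrow> (nat \<Rightarrow> nat \<Rightarrow> bool) \<Rightarrow> bool" where
  "graph_on n E \<longleftrightarrow> (\<forall>x y. E x y \<longrightarrow> x \<in> {1..n} \<and> y \<in> {1..n})
                     \<and> (\<forall>x y. E x y = E y x) \<and> (\<forall>x. \<not> E x x)"

definition deg :: "(nat \<Rightarrow> nat \<Rightarrow> bool) \<Rightarrow> nat \<Rightarrow> nat" where
  "deg E x = card {y. E x y}"

definition is_triangle :: "(nat \<Rightarrow> nat \<Rightarrow> bool) \<Rightarrow> nat set \<Rightarrow> bool" where
  "is_triangle E T \<longleftrightarrow> (\<exists>a b c. T = {a, b, c} \<and> distinct [a, b, c] \<and> E a b \<and> E b c \<and> E a c)"

definition switch_graph ::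
  "(nat \<Rightarrow> nat \<Rightarrow> bool) \<Rightarrow> nat \<Rightarrow> nat \<Rightarrow> nat \<Rightarrow> nat \<Rightarrow> nat \<Rightarrow> nat \<Rightarrow> bool" where
  "switch_graph E b2 b1 b3 b4 = (\<lambda>a b.
      (E a b \<and> {a, b} \<noteq> {b1, b2} \<and> {a, b} \<noteq> {b3, b4}) \<or> {a, b} = {b1, b3} \<or> {a, b} = {b2, b4})"

definition tri_switch :: "(nat \<Rightarrow> nat \<Rightarrow> bool) \<Rightarrow> (nat \<Rightarrow> nat \<Rightarrow> bool) \<Rightarrow> bool" where
  "tri_switch E E' \<longleftrightarrow> (\<exists>b2 b1 x b3 b4. distinct [b2, b1, x, b3, b4]
      \<and> E b2 b1 \<and> E b1 x \<and> E x b3 \<and> E b3 b4 \<and> \<not> E b1 b3 \<and> \<not> E b2 b4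
      \<and> E' = switch_graph E b2 b1 b3 b4)"

definition five_cycle_through :: "(nat \<Rightarrow> nat \<Rightarrow> bool) \<Rightarrow> nat \<Rightarrow> nat \<Rightarrow> nat \<Rightarrow> bool" where
  "five_cycle_through E a b c \<longleftrightarrow> (\<exists>d e. distinct [a, b, c, d, e]
      \<and> E a b \<and> E b c \<and> E c d \<and> E d e \<and> E e a)"

definition four_cycle_through :: "(nat \<Rightarrow> nat \<Rightarrow> bool) \<Rightarrow> nat \<Rightarrow> nat \<Rightarrow> nat \<Rightarrow> bool" where
  "four_cycle_through E a b c \<longleftrightarrow> (\<exists>d. distinct [a, b, c, d]
      \<and> E a b \<and> E b c \<and> E c d \<and> E d a)"

end

theory Submission
  imports Defs
begin

lemma sw_lemma:
  assumes sym: "\<And>a b. E a b = E b a" and irr: "\<And>a. \<not> E a a"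
    and "distinct [b2, b1, x, b3, b4]"
    and "E b2 b1" "E b1 x" "E x b3" "E b3 b4" "\<not> E b1 b3" "\<not> E b2 b4"
  shows "tri_switch E (switch_graph E b2 b1 b3 b4) \<and> is_triangle (switch_graph E b2 b1 b3 b4) {x, b1, b3}"
proof
  show "tri_switch E (switch_graph E b2 b1 b3 b4)"
    unfolding tri_switch_def using assms by blast
  have d: "distinct [x, b1, b3]" using assms(3) by auto
  have "switch_graph E b2 b1 b3 b4 x b1" "switch_graph E b2 b1 b3 b4 b1 b3"
       "switch_graph E b2 b1 b3 b4 x b3"
    using assms unfolding switch_graph_def by (auto simp: doubleton_eq_iff)
  then show "is_triangle (switch_graph E b2 b1 b3 b4) {x, b1, b3}"
    unfolding is_triangle_def using d by blast
qed

lemma other_nb: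
  assumes "deg E r \<ge> 2" shows "\<exists>y. E r y \<and> y \<noteq> v"
proof (rule ccontr)
  assume "\<not> ?thesis"
  then have sub: "{y. E r y} \<subseteq> {v}" by auto
  have "card {y. E r y} \<le> 1"
    using card_mono[OF _ sub] by simp
  then show False using assms unfolding deg_def by simp
qed

theorem lemma2:
  fixes n :: nat and E :: "nat \<Rightarrow> nat \<Rightarrow> bool" and v r1 r2 r3 :: nat
  assumes "graph_on n E"
    and "v \<in> {1..n}"
    and "distinct [r1, r2, r3]"
    and "E v r1" "E v r2" "E v r3"
    and "deg E r1 \<ge> 2" "deg E r2 \<ge> 2" "deg E r3 \<ge> 2"
    and "\<forall>T. is_triangle E T \<longrightarrow> \<not> (v \<in> T \<and> T \<inter> {r1, r2, r3} \<noteq> {})"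
  shows "(\<exists>E' T. tri_switch E E' \<and> is_triangle E' T \<and> v \<in> T \<and> T \<inter> {r1, r2, r3} \<noteq> {})
       \<and> (\<not> (\<forall>j\<in>{r2, r3}. five_cycle_through E r1 v j \<and> \<not> four_cycle_through E r1 v j)
           \<longrightarrow> (\<exists>E' T. tri_switch E E' \<and> is_triangle E' T \<and> v \<in> T \<and> r1 \<in> T))"
proof -
  have sym: "\<And>a b. E a b = E b a" and irr: "\<And>a. \<not> E a a"
    using assms(1) unfolding graph_on_def by blast+
  have notri: "\<not> (E a b \<and> E b c \<and> E a c)" if "a \<noteq> b" "b \<noteq> c" "a \<noteq> c" "v \<in> {a,b,c}"
     "{a,b,c} \<inter> {r1,r2,r3} \<noteq> {}" for a b c
  proof
    assume h: "E a b \<and> E b c \<and> E a c"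
    have "is_triangle E {a,b,c}" unfolding is_triangle_def
      by (rule exI[of _ a], rule exI[of _ b], rule exI[of _ c]) (use that h in simp)
    then show False using assms(10) that by blast
  qed
  have R: "r \<in> {r1,r2,r3} \<Longrightarrow> E v r" for r using assms(4-6) by auto
  have nrr: "\<not> E r s" if "r \<in> {r1,r2,r3}" "s \<in> {r1,r2,r3}" for r s
  proof
    assume "E r s"
    then have "r \<noteq> s" "r \<noteq> v" "s \<noteq> v" using irr R that by auto
    then show False using notri[of v r s] R that \<open>E r s\<close> by auto
  qed
  have nvw: "\<not> E v w" if "r \<in> {r1,r2,r3}" "E r w" for r w
  proof
    assume "E v w"
    then have "r \<noteq> w" "r \<noteq> v" "w \<noteq> v" using irr R that by auto
    then show False using notri[of v r w] R that \<open>E v w\<close> by auto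
  qed
  obtain p1 where p1: "E r1 p1" "p1 \<noteq> v" using other_nb[OF assms(7)] by blast
  obtain p2 where p2: "E r2 p2" "p2 \<noteq> v" using other_nb[OF assms(8)] by blast
  obtain p3 where p3: "E r3 p3" "p3 \<noteq> v" using other_nb[OF assms(9)] by blast
  have dr: "r1 \<noteq> r2" "r1 \<noteq> r3" "r2 \<noteq> r3" using assms(3) by auto
  have vr: "v \<noteq> r1" "v \<noteq> r2" "v \<noteq> r3" using assms(4-6) irr by auto
  have B: "\<exists>E' T. tri_switch E E' \<and> is_triangle E' T \<and> v \<in> T \<and> a \<in> T"
    if "a \<in> {r1,r2,r3}" "j \<in> {r1,r2,r3}" "k \<in> {r1,r2,r3}" "distinct [a,j,k]"
       "E a d" "E j d" "d \<noteq> v" for a j k d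
  proof -
    have "d \<noteq> a" "d \<noteq> j" using that irr by auto
    moreover have "d \<noteq> k" using nrr[of a k] that by auto
    moreover have "v \<noteq> a" "v \<noteq> j" "v \<noteq> k" using that vr by auto
    ultimately have "distinct [k, v, a, d, j]" using that by auto
    moreover have "E k v" "E v a" "E d j" "\<not> E v d" "\<not> E k j"
      using that R sym nvw[of a d] nrr[of k j] by auto
    ultimately show ?thesis using sw_lemma[of E k v a d j, OF sym irr] that by blast
  qed
  have A: "\<exists>E' T. tri_switch E E' \<and> is_triangle E' T \<and> v \<in> T \<and> a \<in> T"
    if "a \<in> {r1,r2,r3}" "j \<in> {r1,r2,r3}" "a \<noteq> j"
       "E a p" "E j q" "p \<noteq> v" "q \<noteq> v" "p \<noteq> q" "\<not> E p q" for a j p q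
  proof -
    have "p \<noteq> a" "q \<noteq> j" using that irr by auto
    moreover have "p \<noteq> j" "q \<noteq> a" using nrr[of a j] nrr[of j a] that by auto
    moreover have "v \<noteq> a" "v \<noteq> j" using that vr by auto
    ultimately have "distinct [p, a, v, j, q]" using that by auto
    moreover have "E p a" "E a v" "E v j" "\<not> E a j"
      using that R sym nrr[of a j] by auto
    ultimately show ?thesis using sw_lemma[of E p a v j q, OF sym irr] that by blast
  qed
  have part1: "\<exists>E' T. tri_switch E E' \<and> is_triangle E' T \<and> v \<in> T \<and> T \<inter> {r1, r2, r3} \<noteq> {}"
  proof (cases "E r2 p3")
    case True
    then obtain E' T where "tri_switch E E'" "is_triangle E' T" "v \<in> T" "r2 \<in> T"
      using B[of r2 r3 r1 p3] p3 dr by auto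
    then show ?thesis by blast
  next
    case n23: False
    show ?thesis
    proof (cases "p3 = p1")
      case True
      then obtain E' T where "tri_switch E E'" "is_triangle E' T" "v \<in> T" "r1 \<in> T"
        using B[of r1 r3 r2 p1] p1 p3 dr by auto
      then show ?thesis by blast
    next
      case ne: False
      show ?thesis
      proof (cases "E p1 p3")
        case False
        then obtain E' T where "tri_switch E E'" "is_triangle E' T" "v \<in> T" "r1 \<in> T"
          using A[of r1 r3 p1 p3] p1 p3 dr ne by auto
        then show ?thesis by blast
      next
        case True
        have "p1 \<noteq> r2" "p1 \<noteq> r1" "p3 \<noteq> r2" "p3 \<noteq> r1"
          using nrr[of r1 r2] nrr[of r3 r1] nrr[of r3 r2] p1 p3 irr n23 by auto
        then have "distinct [r2, v, r1, p1, p3]" using dr vr p1 p3 ne by auto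
        moreover have "E r2 v" "E v r1" "\<not> E v p1" using R sym nvw[of r1 p1] p1 by auto
        ultimately have "tri_switch E (switch_graph E r2 v p1 p3) \<and> is_triangle (switch_graph E r2 v p1 p3) {r1, v, p1}"
          using sw_lemma[of E r2 v r1 p1 p3, OF sym irr] True n23 p1 by blast
        then show ?thesis by blast
      qed
    qed
  qed
  have part2: "\<exists>E' T. tri_switch E E' \<and> is_triangle E' T \<and> v \<in> T \<and> r1 \<in> T"
    if "\<not> five_cycle_through E r1 v j \<or> four_cycle_through E r1 v j"
       "j \<in> {r1,r2,r3}" "k \<in> {r1,r2,r3}" "distinct [r1,j,k]" for j k
  proof (cases "four_cycle_through E r1 v j")
    case True
    then obtain d where "distinct [r1, v, j, d]" "E j d" "E d r1"
      unfolding four_cycle_through_def by blast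
    then show ?thesis using B[of r1 j k d] that sym by auto
  next
    case False
    then have nf: "\<not> five_cycle_through E r1 v j" using that by blast
    have "deg E j \<ge> 2" using that(2) assms(7-9) by auto
    then obtain q where q: "E j q" "q \<noteq> v" using other_nb by blast
    show ?thesis
    proof (cases "q = p1")
      case True
      then show ?thesis using B[of r1 j k p1] that p1 q by auto
    next
      case ne: False
      show ?thesis
      proof (cases "E q p1")
        case True
        have "p1 \<noteq> r1" "q \<noteq> j" "p1 \<noteq> j" "q \<noteq> r1"
          using irr p1 q nrr[of r1 j] nrr[of j r1] that by auto
        then have "distinct [r1, v, j, q, p1]" using that vr p1 q ne by auto
        then have "five_cycle_through E r1 v j" unfolding five_cycle_through_def
          using True p1 q that R sym by blast
        then show ?thesis using nf by blast
      next
        case False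
        then show ?thesis using A[of r1 j p1 q] p1 q that ne sym by auto
      qed
    qed
  qed
  show ?thesis
  proof (intro conjI impI)
    show "\<exists>E' T. tri_switch E E' \<and> is_triangle E' T \<and> v \<in> T \<and> T \<inter> {r1, r2, r3} \<noteq> {}"
      by (rule part1)
  next
    assume "\<not> (\<forall>j\<in>{r2, r3}. five_cycle_through E r1 v j \<and> \<not> four_cycle_through E r1 v j)"
    then consider "\<not> five_cycle_through E r1 v r2 \<or> four_cycle_through E r1 v r2"
      | "\<not> five_cycle_through E r1 v r3 \<or> four_cycle_through E r1 v r3" by blast
    then show "\<exists>E' T. tri_switch E E' \<and> is_triangle E' T \<and> v \<in> T \<and> r1 \<in> T"
    proof cases
      case 1 then show ?thesis using part2[of r2 r3] assms(3) by auto
    next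
      case 2 then show ?thesis using part2[of r3 r2] assms(3) by auto
    qed
  qed
qed

end
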